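(* Let $\gamma\ge7/5$ and consider the SIEMS5 method ($\mathrm{k}=5$) with coefficients defined as in the context. Then $\sigma_{\mathrm{F}}=1$, $$\sigma_{\mathrm{E}}=\frac{15(16\gamma^4+32\gamma^3-24\gamma^2+8\gamma-1)}{16(15\gamma^4-15\gamma^2+10\gamma-2)},\quad\lambda_{\mathrm{I}}=\frac{15(2\gamma-1)^4}{16(15\gamma^4-15\gamma^2+10\gamma-2)},$$ so that $\mathfrak{I}_{\mathrm{IE}}=\dfrac{(2\gamma-1)^4}{16\gamma^4+32\gamma^3-24\gamma^2+8\gamma-1}$.
   Context: The $\gamma$-parameterized SIEMS-$\mathrm{k}$ method has coefficients $a_j$ ($0\le j\le\mathrm{k}-1$), $b_j$ ($0\le j\le\mathrm{k}$), $c_j$ ($0\le j\le\mathrm{k}-1$) determined by the polynomial identities (in $\zeta$) $\sum_{j=0}^{\mathrm{k}-1}a_j\zeta^{\mathrm{k}-j-1}=\sum_{j=1}^{\mathrm{k}}\frac{f^{(j)}(1)}{j!}(\zeta-1)^{j-1}$ with $f(z)=(\gamma z-\gamma+1)^{\mathrm{k}-1}z\ln z$; $\sum_{j=0}^{\mathrm{k}}b_j\zeta^{\mathrm{k}-j}=\zeta(\gamma\zeta-\gamma+1)^{\mathrm{k}-1}$; $\sum_{j=0}^{\mathrm{k}-1}c_j\zeta^{\mathrm{k}-j-1}=\zeta(\gamma\zeta-\gamma+1)^{\mathrm{k}-1}-\gamma^{\mathrm{k}-1}(\zeta-1)^{\mathrm{k}}$. (For $\mathrm{k}=5$: $(a_0,\dots,a_4)=(\gamma^4+2\gamma^3-\gamma^2+\tfrac{\gamma}{3}-\tfrac1{20},\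 -4\gamma^4-4\gamma^3+7\gamma^2-2\gamma+\tfrac{17}{60},\ 6\gamma^4-9\gamma^2+6\gamma-\tfrac{43}{60},\ -4\gamma^4+4\gamma^3+\gamma^2-\tfrac{10\gamma}{3}+\tfrac{77}{60},\ \gamma^4-2\gamma^3+2\gamma^2-\gamma+\tfrac15)$.) Define $a(\theta)=\sum_j a_je^{\imath j\theta}$, $b(\theta)=\sum_j b_je^{\imath j\theta}$, $c(\theta)=\sum_jc_je^{\imath j\theta}$, $\sigma_{\mathrm{F}}=\max_{\theta\in[0,2\pi)}|1/a(\theta)|$, $\sigma_{\mathrm{E}}=\max_{\theta\in[0,2\pi)}|c(\theta)/a(\theta)|$, $\lambda_{\mathrm{I}}=\min_{\theta\in[0,2\pi)}\Re[b(\theta)/a(\theta)]$, $\mathfrak{I}_{\mathrm{IE}}=\lambda_{\mathrm{I}}/\sigma_{\mathrm{E}}$. *)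

theory Defs
  imports "HOL-Analysis.Analysis" "HOL-Computational_Algebra.Polynomial"
begin

text \<open>The a_j are the explicit values stated in the
paper's context; b_j and c_j are defined by the polynomial identities
  sum_j b_j z^(5-j) = z (g z - g + 1)^4,
  sum_j c_j z^(4-j) = z (g z - g + 1)^4 - g^4 (z - 1)^5.\<close>

definition siems5_a :: "real \<Rightarrow> nat \<Rightarrow> real" where
  "siems5_a g j =
     (if j = 0 then g^4 + 2*g^3 - g^2 + g/3 - 1/20
      else if j = 1 then -4*g^4 - 4*g^3 + 7*g^2 - 2*g + 17/60
      else if j = 2 then 6*g^4 - 9*g^2 + 6*g - 43/60
      else if j = 3 then -4*g^4 + 4*g^3 + g^2 - 10*g/3 + 77/60
      else if j = 4 then g^4 - 2*g^3 + 2*g^2 - g + 1/5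
      else 0)"

definition siems5_bpoly :: "real \<Rightarrow> real poly" where
  "siems5_bpoly g = [:0, 1:] * [:1 - g, g:] ^ 4"

definition siems5_cpoly :: "real \<Rightarrow> real poly" where
  "siems5_cpoly g = siems5_bpoly g - smult (g^4) ([:-1, 1:] ^ 5)"

definition siems5_b :: "real \<Rightarrow> nat \<Rightarrow> real" where
  "siems5_b g j = coeff (siems5_bpoly g) (5 - j)"   (* used for 0 \<le> j \<le> 5 *)

definition siems5_c :: "real \<Rightarrow> nat \<Rightarrow> real" where
  "siems5_c g j = coeff (siems5_cpoly g) (4 - j)"   (* used for 0 \<le> j \<le> 4 *)

definition aS :: "real \<Rightarrow> real \<Rightarrow> complex" where
  "aS g \<theta> = (\<Sum>j\<le>4. complex_of_real (siems5_a g j) * cis (real j * \<theta>))"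

definition bS :: "real \<Rightarrow> real \<Rightarrow> complex" where
  "bS g \<theta> = (\<Sum>j\<le>5. complex_of_real (siems5_b g j) * cis (real j * \<theta>))"

definition cS :: "real \<Rightarrow> real \<Rightarrow> complex" where
  "cS g \<theta> = (\<Sum>j\<le>4. complex_of_real (siems5_c g j) * cis (real j * \<theta>))"

definition sigmaF :: "real \<Rightarrow> real" where
  "sigmaF g = (SUP \<theta>\<in>{0..<2*pi}. norm (1 / aS g \<theta>))"

definition sigmaE :: "real \<Rightarrow> real" where
  "sigmaE g = (SUP \<theta>\<in>{0..<2*pi}. norm (cS g \<theta> / aS g \<theta>))"

definition lambdaI :: "real \<Rightarrow> real" where
  "lambdaI g = (INF \<theta>\<in>{0..<2*pi}. Re (bS g \<theta> / aS g \<theta>))"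

definition IIE :: "real \<Rightarrow> real" where
  "IIE g = lambdaI g / sigmaE g"

end

theory Submission
  imports Defs
begin
lemma sum4: "(\<Sum>j\<le>4. f (j::nat)) = f 0 + f 1 + f 2 + f 3 + (f 4::'a::comm_monoid_add)"
  by (simp add: eval_nat_numeral atMost_Suc add_ac)
lemma sum5: "(\<Sum>j\<le>5. f (j::nat)) = f 0 + f 1 + f 2 + f 3 + f 4 + (f 5::'a::comm_monoid_add)"
  by (simp add: eval_nat_numeral atMost_Suc add_ac)
lemma trig:
  fixes t :: real
  defines "xx \<equiv> cos t" and "yy \<equiv> sin t"
  shows "cos (2*t) = 2*xx^2-1" "sin (2*t) = 2*yy*xx"
    "cos (3*t) = 4*xx^3-3*xx" "sin (3*t) = yy*(4*xx^2-1)"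
    "cos (4*t) = 8*xx^4-8*xx^2+1" "sin (4*t) = yy*(8*xx^3-4*xx)"
    "cos (5*t) = 16*xx^5-20*xx^3+5*xx" "sin (5*t) = yy*(16*xx^4-12*xx^2+1)"
proof -
  have p: "yy^2 + xx^2 = 1" unfolding yy_def xx_def by simp
  have c2: "cos (2*t) = 2*xx^2-1" unfolding xx_def by (simp add: cos_double_cos)
  have s2: "sin (2*t) = 2*yy*xx" unfolding xx_def yy_def by (simp add: sin_double)
  have c3: "cos (3*t) = cos (2*t)*xx - sin (2*t)*yy"
    using cos_add[of "2*t" t] unfolding xx_def yy_def by (simp add: algebra_simps)
  have s3: "sin (3*t) = sin (2*t)*xx + cos (2*t)*yy"
    using sin_add[of "2*t" t] unfolding xx_def yy_def by (simp add: algebra_simps)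
  have c4: "cos (4*t) = cos (3*t)*xx - sin (3*t)*yy"
    using cos_add[of "3*t" t] unfolding xx_def yy_def by (simp add: algebra_simps)
  have s4: "sin (4*t) = sin (3*t)*xx + cos (3*t)*yy"
    using sin_add[of "3*t" t] unfolding xx_def yy_def by (simp add: algebra_simps)
  have c5: "cos (5*t) = cos (4*t)*xx - sin (4*t)*yy"
    using cos_add[of "4*t" t] unfolding xx_def yy_def by (simp add: algebra_simps)
  have s5: "sin (5*t) = sin (4*t)*xx + cos (4*t)*yy"
    using sin_add[of "4*t" t] unfolding xx_def yy_def by (simp add: algebra_simps)
  show "cos (2*t) = 2*xx^2-1" "sin (2*t) = 2*yy*xx" by (fact c2, fact s2)
  show "cos (3*t) = 4*xx^3-3*xx" using c3 c2 s2 p by algebra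
  show "sin (3*t) = yy*(4*xx^2-1)" using s3 c2 s2 p by algebra
  show "cos (4*t) = 8*xx^4-8*xx^2+1" using c4 c3 s3 c2 s2 p by algebra
  show "sin (4*t) = yy*(8*xx^3-4*xx)" using s4 c3 s3 c2 s2 p by algebra
  show "cos (5*t) = 16*xx^5-20*xx^3+5*xx" using c5 s4 c4 c3 s3 c2 s2 p by algebra
  show "sin (5*t) = yy*(16*xx^4-12*xx^2+1)" using s5 s4 c4 c3 s3 c2 s2 p by algebra
qed
lemma bpoly: "siems5_bpoly g = [:0, (1-g)^4, 4*g*(1-g)^3, 6*g^2*(1-g)^2, 4*g^3*(1-g), g^4:]"
proof -
  have "poly (siems5_bpoly g) x = poly [:0, (1-g)^4, 4*g*(1-g)^3, 6*g^2*(1-g)^2, 4*g^3*(1-g), g^4:] x" for x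
    unfolding siems5_bpoly_def by (simp add: algebra_simps) algebra
  then show ?thesis using poly_eq_poly_eq_iff by blast
qed
lemma cpoly: "siems5_cpoly g = [:g^4, (1-g)^4 - 5*g^4, 4*g*(1-g)^3 + 10*g^4, 6*g^2*(1-g)^2 - 10*g^4, 5*g^4 + 4*g^3*(1-g):]"
proof -
  have "poly (siems5_cpoly g) x = poly [:g^4, (1-g)^4 - 5*g^4, 4*g*(1-g)^3 + 10*g^4, 6*g^2*(1-g)^2 - 10*g^4, 5*g^4 + 4*g^3*(1-g):] x" for x
    unfolding siems5_cpoly_def siems5_bpoly_def by (simp add: algebra_simps) algebra
  then show ?thesis using poly_eq_poly_eq_iff by blast
qed
definition Ng :: "real \<Rightarrow> real" where "Ng g = 16*g^4 + 32*g^3 - 24*g^2 + 8*g - 1"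

definition Dg :: "real \<Rightarrow> real" where "Dg g = 15*g^4 - 15*g^2 + 10*g - 2"

definition RaI :: "real \<Rightarrow> real \<Rightarrow> real" where
  "RaI c g = (26 + (-200)*g + 300*g^2 + (-120)*g^4 + (-107)*c + 240*c*g + 120*c*g^2 + (-480)*c*g^3 + 240*c*g^4 + (-91)*c^2 + 600*c^2*g + (-1020)*c^2*g^2 + 480*c^2*g^3 + 120*c^2*g^4 + 154*c^3 + (-400)*c^3*g + 120*c^3*g^2 + 480*c^3*g^3 + (-480)*c^3*g^4 + 48*c^4 + (-240)*c^4*g + 480*c^4*g^2 + (-480)*c^4*g^3 + 240*c^4*g^4)"

definition IaI :: "real \<Rightarrow> real \<Rightarrow> real" where
  "IaI c g = ((-30) + 40*g + 180*g^2 + (-240)*g^3 + (-67)*c + 480*c*g + (-780)*c*g^2 + 240*c*g^3 + 240*c*g^4 + 154*c^2 + (-400)*c^2*g + 120*c^2*g^2 + 480*c^2*g^3 + (-480)*c^2*g^4 + 48*c^3 + (-240)*c^3*g + 480*c^3*g^2 + (-480)*c^3*g^3 + 240*c^3*g^4)"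

definition Rb :: "real \<Rightarrow> real \<Rightarrow> real" where
  "Rb c g = (1 + (-4)*g + 8*g^3 + (-4)*g^4 + (-12)*c*g + 36*c*g^2 + (-32)*c*g^3 + 8*c*g^4 + (-8)*c^2 + 32*c^2*g + (-36)*c^2*g^2 + 8*c^2*g^3 + 4*c^2*g^4 + 16*c^3*g + (-48)*c^3*g^2 + 48*c^3*g^3 + (-16)*c^3*g^4 + 8*c^4 + (-32)*c^4*g + 48*c^4*g^2 + (-32)*c^4*g^3 + 8*c^4*g^4)"

definition Ib :: "real \<Rightarrow> real \<Rightarrow> real" where
  "Ib c g = ((-4)*g + 12*g^2 + (-8)*g^3 + (-4)*c + 16*c*g + (-12)*c*g^2 + (-8)*c*g^3 + 8*c*g^4 + 16*c^2*g + (-48)*c^2*g^2 + 48*c^2*g^3 + (-16)*c^2*g^4 + 8*c^3 + (-32)*c^3*g + 48*c^3*g^2 + (-32)*c^3*g^3 + 8*c^3*g^4)"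

definition Rc :: "real \<Rightarrow> real \<Rightarrow> real" where
  "Rc c g = ((-4)*g + 12*g^2 + (-8)*g^3 + (-4)*g^4 + (-3)*c + 12*c*g + (-12)*c*g^2 + 8*c*g^4 + 8*c^2*g + (-24)*c^2*g^2 + 24*c^2*g^3 + 4*c^2*g^4 + 4*c^3 + (-16)*c^3*g + 24*c^3*g^2 + (-16)*c^3*g^3 + (-16)*c^3*g^4 + 8*c^4*g^4)"

definition Ic :: "real \<Rightarrow> real \<Rightarrow> real" where
  "Ic c g = ((-1) + 4*g + (-8)*g^3 + 8*c*g + (-24)*c*g^2 + 24*c*g^3 + 8*c*g^4 + 4*c^2 + (-16)*c^2*g + 24*c^2*g^2 + (-16)*c^2*g^3 + (-16)*c^2*g^4 + 8*c^3*g^4)"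

definition B1 :: "real \<Rightarrow> real \<Rightarrow> real \<Rightarrow> real" where
  "B1 p q H = 1*q^8*(90557111106 + 119510974464*H + 68493996032*H^2 + 22209073152*H^3 + 4438801920*H^4 + 557211648*H^5 + 42642432*H^6 + 1806336*H^7 + 32256*H^8) + 8*p^1*q^7*(55070919610 + 73739890140*H + 42684592020*H^2 + 13927668720*H^3 + 2791954200*H^4 + 350474880*H^5 + 26752320*H^6 + 1128960*H^7 + 20160*H^8) + 28*p^2*q^6*(30267494520 + 41420753880*H + 24317956440*H^2 + 8003811840*H^3 + 1610846400*H^4 + 202172160*H^5 + 15373440*H^6 + 645120*H^7 + 11520*H^8) + 56*p^3*q^5*(14265985260 + 20237255940*H + 12137218220*H^2 + 4045195920*H^3 + 818608200*H^4 + 102670080*H^5 + 7758720*H^6 + 322560*H^7 + 5760*H^8) + 70*p^4*q^4*(5185541254 + 7873086576*H + 4885506288*H^2 + 1659514368*H^3 + 338369280*H^4 + 42335232*H^5 + 3161088*H^6 + 129024*H^7 + 2304*H^8) + 56*p^5*q^3*(1145311926 + 2011936044*H + 1305949572*H^2 + 454460592*H^3 + 93259320*H^4 + 11534208*H^5 + 833472*H^6 + 32256*H^7 + 576*H^8) + 28*p^6*q^2*(264446700 + 337494600*H + 141677000*H^2 + 37728000*H^3 + 6408000*H^4 + 633600*H^5 + 28800*H^6) + 8*p^7*q^1*(662095000 + 533452500*H + 135817500*H^2 + 17010000*H^3 + 945000*H^4) + 1*p^8*(457406250 + 283500000*H + 31500000*H^2)"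

definition B2 :: "real \<Rightarrow> real \<Rightarrow> real \<Rightarrow> real" where
  "B2 p q H = 1*q^3*(14766936936736194 + 69975339019177536*H + 105549779251775808*H^2 + 84762662086798848*H^3 + 43135393033330560*H^4 + 15094275910331904*H^5 + 3788539357326336*H^6 + 695935501498368*H^7 + 93982996505088*H^8 + 9238071214080*H^9 + 643060924416*H^10 + 30009360384*H^11 + 840056832*H^12 + 10616832*H^13) + 3*p^1*q^2*(9662456658764490 + 18402024800817120*H + 15864648612856800*H^2 + 8167739001139200*H^3 + 2788003206691200*H^4 + 661831288419840*H^5 + 111343341534720*H^6 + 13252689254400*H^7 + 1091247705600*H^8 + 59024793600*H^9 + 1879695360*H^10 + 26542080*H^11) + 3*p^2*q^1*(1900906328090250 + 2805881673888000*H + 1830091452696000*H^2 + 691341362352000*H^3 + 166421681544000*H^4 + 26417714112000*H^5 + 2757518784000*H^6 + 181801728000*H^7 + 6831936000*H^8 + 110592000*H^9) + 1*p^3*(427165202981250 + 445724291700000*H + 197931552300000*H^2 + 48349494000000*H^3 + 6988977000000*H^4 + 594561600000*H^5 + 27345600000*H^6 + 518400000*H^7)"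

definition B3 :: "real \<Rightarrow> real \<Rightarrow> real \<Rightarrow> real" where
  "B3 p q H = 1*q^3*(3595913514 + 53158994928*H + 77917633776*H^2 + 52173456192*H^3 + 20249852544*H^4 + 4953917952*H^5 + 780847104*H^6 + 77395968*H^7 + 4409856*H^8 + 110592*H^9) + 3*p^1*q^2*(12802145490 + 19342975440*H + 12512092560*H^2 + 4492820800*H^3 + 967566400*H^4 + 125022720*H^5 + 8977920*H^6 + 276480*H^7) + 3*p^2*q^1*(2828015250 + 2952550000*H + 1234590000*H^2 + 258840000*H^3 + 27240000*H^4 + 1152000*H^5) + 1*p^3*(683606250 + 400050000*H + 79650000*H^2 + 5400000*H^3)"

lemma reA: "60 * Re (aS g t) = 2 * RaI (cos t) g"
proof -
  have h: "Re (aS g t) = siems5_a g 0 + siems5_a g 1 * cos t + siems5_a g 2 * cos(2*t) + siems5_a g 3 * cos(3*t) + siems5_a g 4 * cos(4*t)"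
    by (simp add: aS_def sum4)
  show ?thesis unfolding h trig siems5_a_def RaI_def by (simp add: field_simps)
qed
lemma imA: "60 * Im (aS g t) = 2 * sin t * IaI (cos t) g"
proof -
  have h: "Im (aS g t) = siems5_a g 1 * sin t + siems5_a g 2 * sin(2*t) + siems5_a g 3 * sin(3*t) + siems5_a g 4 * sin(4*t)"
    by (simp add: aS_def sum4)
  show ?thesis unfolding h trig siems5_a_def IaI_def by (simp add: field_simps)
qed

lemma bvals: "siems5_b g 0 = g^4" "siems5_b g 1 = 4*g^3*(1-g)" "siems5_b g 2 = 6*g^2*(1-g)^2"
  "siems5_b g 3 = 4*g*(1-g)^3" "siems5_b g 4 = (1-g)^4" "siems5_b g 5 = 0"
  by (simp_all add: siems5_b_def bpoly eval_nat_numeral)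
lemma cvals: "siems5_c g 0 = 5*g^4 + 4*g^3*(1-g)" "siems5_c g 1 = 6*g^2*(1-g)^2 - 10*g^4"
  "siems5_c g 2 = 4*g*(1-g)^3 + 10*g^4" "siems5_c g 3 = (1-g)^4 - 5*g^4" "siems5_c g 4 = g^4"
  by (simp_all add: siems5_c_def cpoly eval_nat_numeral)
lemma reB: "Re (bS g t) = Rb (cos t) g"
proof -
  have h: "Re (bS g t) = siems5_b g 0 + siems5_b g 1 * cos t + siems5_b g 2 * cos(2*t) + siems5_b g 3 * cos(3*t) + siems5_b g 4 * cos(4*t) + siems5_b g 5 * cos(5*t)"
    by (simp add: bS_def sum5)
  show ?thesis unfolding h trig bvals Rb_def by algebra
qed
lemma imB: "Im (bS g t) = sin t * Ib (cos t) g"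
proof -
  have h: "Im (bS g t) = siems5_b g 1 * sin t + siems5_b g 2 * sin(2*t) + siems5_b g 3 * sin(3*t) + siems5_b g 4 * sin(4*t) + siems5_b g 5 * sin(5*t)"
    by (simp add: bS_def sum5)
  show ?thesis unfolding h trig bvals Ib_def by algebra
qed
lemma reC: "Re (cS g t) = Rc (cos t) g"
proof -
  have h: "Re (cS g t) = siems5_c g 0 + siems5_c g 1 * cos t + siems5_c g 2 * cos(2*t) + siems5_c g 3 * cos(3*t) + siems5_c g 4 * cos(4*t)"
    by (simp add: cS_def sum4)
  show ?thesis unfolding h trig cvals Rc_def by algebra
qed
lemma imC: "Im (cS g t) = sin t * Ic (cos t) g"
proof -
  have h: "Im (cS g t) = siems5_c g 1 * sin t + siems5_c g 2 * sin(2*t) + siems5_c g 3 * sin(3*t) + siems5_c g 4 * sin(4*t)"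
    by (simp add: cS_def sum4)
  show ?thesis unfolding h trig cvals Ic_def by algebra
qed
lemma B1_id: "28000000 * (RaI c g^2 + (1-c^2)*IaI c g^2 - 900) = (1-c) * B1 (1+c) (1-c) (5*g-7)"
  unfolding RaI_def IaI_def Rb_def Ib_def Rc_def Ic_def Ng_def Dg_def B1_def B2_def B3_def by algebra
lemma B2_id: "3125000 * (225*Ng g^2*(RaI c g^2 + (1-c^2)*IaI c g^2) - 230400*Dg g^2*(Rc c g^2 + (1-c^2)*Ic c g^2)) = (1+c) * B2 (1+c) (1-c) (5*g-7)"
  unfolding RaI_def IaI_def Rb_def Ib_def Rc_def Ic_def Ng_def Dg_def B1_def B2_def B3_def by algebra
lemma B3_id: "25000 * (480*Dg g*(Rb c g*RaI c g + (1-c^2)*Ib c g*IaI c g) - 15*(2*g-1)^4*(RaI c g^2 + (1-c^2)*IaI c g^2)) = (1+c) * B3 (1+c) (1-c) (5*g-7)"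
  unfolding RaI_def IaI_def Rb_def Ib_def Rc_def Ic_def Ng_def Dg_def B1_def B2_def B3_def by algebra

definition NA :: "real \<Rightarrow> real \<Rightarrow> real" where
  "NA c g = RaI c g^2 + (1-c^2)*IaI c g^2"
definition NC :: "real \<Rightarrow> real \<Rightarrow> real" where
  "NC c g = Rc c g^2 + (1-c^2)*Ic c g^2"
definition XB :: "real \<Rightarrow> real \<Rightarrow> real" where
  "XB c g = Rb c g * RaI c g + (1-c^2)*Ib c g * IaI c g"

lemma B1_id': "28000000 * (NA c g - 900) = (1-c) * B1 (1+c) (1-c) (5*g-7)"
  using B1_id[of c g] unfolding NA_def .
lemma B2_id': "3125000 * (225*Ng g^2*NA c g - 230400*Dg g^2*NC c g) = (1+c) * B2 (1+c) (1-c) (5*g-7)"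
  using B2_id[of g c] unfolding NA_def NC_def .
lemma B3_id': "25000 * (480*Dg g*XB c g - 15*(2*g-1)^4*NA c g) = (1+c) * B3 (1+c) (1-c) (5*g-7)"
  using B3_id[of g c] unfolding NA_def XB_def .

lemma B1_nn: "0 \<le> p \<Longrightarrow> 0 \<le> q \<Longrightarrow> 0 \<le> H \<Longrightarrow> 0 \<le> B1 p q H"
  unfolding B1_def by (intro add_nonneg_nonneg mult_nonneg_nonneg zero_le_power; simp)
lemma B2_nn: "0 \<le> p \<Longrightarrow> 0 \<le> q \<Longrightarrow> 0 \<le> H \<Longrightarrow> 0 \<le> B2 p q H"
  unfolding B2_def by (intro add_nonneg_nonneg mult_nonneg_nonneg zero_le_power; simp)
lemma B3_nn: "0 \<le> p \<Longrightarrow> 0 \<le> q \<Longrightarrow> 0 \<le> H \<Longrightarrow> 0 \<le> B3 p q H"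
  unfolding B3_def by (intro add_nonneg_nonneg mult_nonneg_nonneg zero_le_power; simp)

lemma Dg_pos: assumes "g \<ge> 7/5" shows "Dg g > 0"
proof -
  define H where "H = 5*g-7"
  have H: "H \<ge> 0" using assms unfolding H_def by simp
  have "625 * Dg g = 25140 + 16580*H + 4035*H^2 + 420*H^3 + 15*H^4"
    unfolding H_def Dg_def by algebra
  moreover have "0 \<le> 16580*H + 4035*H^2 + 420*H^3 + 15*H^4" using H by simp
  ultimately show ?thesis by linarith
qed
lemma Ng_pos: assumes "g \<ge> 7/5" shows "Ng g > 0"
proof -
  define H where "H = 5*g-7"
  have H: "H \<ge> 0" using assms unfolding H_def by simp
  have "625 * Ng g = 70271 + 38072*H + 7464*H^2 + 608*H^3 + 16*H^4"
    unfolding H_def Ng_def by algebra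
  moreover have "0 \<le> 38072*H + 7464*H^2 + 608*H^3 + 16*H^4" using H by simp
  ultimately show ?thesis by linarith
qed

lemma normA: "900 * (cmod (aS g t))^2 = NA (cos t) g"
proof -
  have h: "60 * Re (aS g t) = 2 * RaI (cos t) g" "60 * Im (aS g t) = 2 * sin t * IaI (cos t) g"
    "sin t ^2 = 1 - cos t^2" by (rule reA, rule imA, simp add: sin_squared_eq)
  have "900 * (x^2 + y^2) = X^2 + (1-c^2)*Y^2"
    if "60 * x = 2 * X" "60 * y = 2 * s * Y" "s^2 = 1 - c^2" for x y X Y s c :: real
  proof -
    have e1: "X = 30*x" and e2: "s*Y = 30*y" using that(1,2) by linarith+
    have "X^2 + (1-c^2)*Y^2 = X^2 + (s*Y)^2" using that(3) by (simp add: power_mult_distrib)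
    also have "\<dots> = 900*(x^2+y^2)" unfolding e1 e2 by (simp add: power_mult_distrib algebra_simps)
    finally show ?thesis by simp
  qed
  from this[OF h] show ?thesis unfolding cmod_power2 NA_def .
qed
lemma normC: "(cmod (cS g t))^2 = NC (cos t) g"
proof -
  have h: "Re (cS g t) = Rc (cos t) g" "Im (cS g t) = sin t * Ic (cos t) g"
    "sin t ^2 = 1 - cos t^2" by (rule reC, rule imC, simp add: sin_squared_eq)
  have "(x^2 + y^2) = X^2 + (1-c^2)*Y^2"
    if "x = X" "y = s * Y" "s^2 = 1 - c^2" for x y X Y s c :: real
    using that by (simp add: power_mult_distrib)
  from this[OF h] show ?thesis unfolding cmod_power2 NC_def .
qed
lemma reBA: "30 * (Re (bS g t) * Re (aS g t) + Im (bS g t) * Im (aS g t)) = XB (cos t) g"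
proof -
  have h: "Re (bS g t) = Rb (cos t) g" "Im (bS g t) = sin t * Ib (cos t) g"
    "60 * Re (aS g t) = 2 * RaI (cos t) g" "60 * Im (aS g t) = 2 * sin t * IaI (cos t) g"
    "sin t ^2 = 1 - cos t^2" by (rule reB, rule imB, rule reA, rule imA, simp add: sin_squared_eq)
  have "30 * (u * x + v * y) = U * X + (1-c^2)*V*Y"
    if "u = U" "v = s * V" "60 * x = 2 * X" "60 * y = 2 * s * Y" "s^2 = 1 - c^2" for u v U V x y X Y s c :: real
  proof -
    have "x = X/30" "y = s*Y/30" using that(3,4) by linarith+
    then have "30 * (u * x + v * y) = U * X + s^2*V*Y" using that(1,2) by (simp add: algebra_simps power2_eq_square)
    then show ?thesis using that(5) by simp
  qed
  from this[OF h] show ?thesis unfolding XB_def .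
qed

lemma NA_ge: assumes "g \<ge> 7/5" "-1 \<le> c" "c \<le> 1" shows "NA c g \<ge> 900"
proof -
  have "0 \<le> (1-c) * B1 (1+c) (1-c) (5*g-7)"
    using assms by (intro mult_nonneg_nonneg B1_nn) auto
  then have "0 \<le> 28000000 * (NA c g - 900)" by (simp only: B1_id'[of c g])
  then show ?thesis by simp
qed
lemma NA_1: "NA 1 g = 900"
  using B1_id'[of 1 g] by simp
lemma P2_ge: assumes "g \<ge> 7/5" "-1 \<le> c" "c \<le> 1"
  shows "230400*Dg g^2*NC c g \<le> 225*Ng g^2*NA c g"
proof -
  have "0 \<le> (1+c) * B2 (1+c) (1-c) (5*g-7)"
    using assms by (intro mult_nonneg_nonneg B2_nn) auto
  then have "0 \<le> 3125000 * (225*Ng g^2*NA c g - 230400*Dg g^2*NC c g)" by (simp only: B2_id'[of g c])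
  then show ?thesis by simp
qed
lemma P2_eq: "230400*Dg g^2*NC (-1) g = 225*Ng g^2*NA (-1) g"
  using B2_id'[of g "-1"] by simp
lemma P3_ge: assumes "g \<ge> 7/5" "-1 \<le> c" "c \<le> 1"
  shows "15*(2*g-1)^4*NA c g \<le> 480*Dg g*XB c g"
proof -
  have "0 \<le> (1+c) * B3 (1+c) (1-c) (5*g-7)"
    using assms by (intro mult_nonneg_nonneg B3_nn) auto
  then have "0 \<le> 25000 * (480*Dg g*XB c g - 15*(2*g-1)^4*NA c g)" by (simp only: B3_id'[of g c])
  then show ?thesis by simp
qed
lemma P3_eq: "15*(2*g-1)^4*NA (-1) g = 480*Dg g*XB (-1) g"
  using B3_id'[of g "-1"] by simp


lemma cmod_a_ge: assumes "g \<ge> 7/5" shows "cmod (aS g t) \<ge> 1"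
proof -
  have "900 \<le> NA (cos t) g" using NA_ge[OF assms, of "cos t"] by simp
  then have "1^2 \<le> (cmod (aS g t))^2" using normA[of g t] by simp
  then show ?thesis by (rule power2_le_imp_le) simp
qed
lemma cmod_a0: "cmod (aS g 0) = 1"
proof -
  have "(cmod (aS g 0))^2 = 1^2" using normA[of g 0] NA_1[of g] by simp
  then show ?thesis by (rule power2_eq_imp_eq) simp_all
qed

lemma ratioE_le: assumes "g \<ge> 7/5"
  shows "cmod (cS g t / aS g t) \<le> 15 * Ng g / (16 * Dg g)"
proof -
  have D: "Dg g > 0" and N: "Ng g > 0" using Dg_pos Ng_pos assms by auto
  have a: "cmod (aS g t) \<ge> 1" using cmod_a_ge[OF assms] .
  have "230400*Dg g^2*NC (cos t) g \<le> 225*Ng g^2*NA (cos t) g" using P2_ge[OF assms] by simp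
  then have "230400*Dg g^2*(cmod (cS g t))^2 \<le> 225*Ng g^2*(900 * (cmod (aS g t))^2)"
    unfolding normC normA .
  then have "(16*Dg g*cmod (cS g t))^2 \<le> (15*Ng g*cmod (aS g t))^2"
    by (simp add: power_mult_distrib)
  then have "16*Dg g*cmod (cS g t) \<le> 15*Ng g*cmod (aS g t)"
    by (rule power2_le_imp_le) (use N a in simp)
  then have "cmod (cS g t) \<le> (15*Ng g*cmod (aS g t))/(16*Dg g)"
    using D by (subst pos_le_divide_eq) (simp_all add: mult_ac)
  moreover have "0 < cmod (aS g t)" using a by linarith
  ultimately show ?thesis by (simp add: norm_divide pos_divide_le_eq)
qed
lemma ratioE_pi: assumes "g \<ge> 7/5"
  shows "cmod (cS g pi / aS g pi) = 15 * Ng g / (16 * Dg g)"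
proof -
  have D: "Dg g > 0" and N: "Ng g > 0" using Dg_pos Ng_pos assms by auto
  have a: "cmod (aS g pi) \<ge> 1" using cmod_a_ge[OF assms] .
  have "230400*Dg g^2*NC (cos pi) g = 225*Ng g^2*NA (cos pi) g" using P2_eq by simp
  then have "230400*Dg g^2*(cmod (cS g pi))^2 = 225*Ng g^2*(900 * (cmod (aS g pi))^2)"
    unfolding normC normA .
  then have "(16*Dg g*cmod (cS g pi))^2 = (15*Ng g*cmod (aS g pi))^2"
    by (simp add: power_mult_distrib)
  then have e: "16*Dg g*cmod (cS g pi) = 15*Ng g*cmod (aS g pi)"
    by (rule power2_eq_imp_eq) (use N D a in simp_all)
  have "cmod (aS g pi) \<noteq> 0" "16 * Dg g \<noteq> 0" using a D by auto
  then show ?thesis unfolding norm_divide using e by (subst frac_eq_eq) (simp_all add: mult_ac)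
qed

lemma reBA_div: assumes "g \<ge> 7/5"
  shows "Re (bS g t / aS g t) = 30 * XB (cos t) g / NA (cos t) g"
proof -
  have e1: "(norm (aS g t))^2 = NA (cos t) g / 900" using normA[of g t] by simp
  have e2: "Re (bS g t) * Re (aS g t) + Im (bS g t) * Im (aS g t) = XB (cos t) g / 30"
    using reBA[of g t] by simp
  show ?thesis unfolding Re_divide' e1 e2 by simp
qed
lemma lam_le: assumes "g \<ge> 7/5"
  shows "15 * (2*g - 1)^4 / (16 * Dg g) \<le> Re (bS g t / aS g t)"
proof -
  have D: "Dg g > 0" using Dg_pos assms by auto
  have NA: "NA (cos t) g > 0" using NA_ge[OF assms, of "cos t"] by simp
  have "15*(2*g-1)^4*NA (cos t) g \<le> 480*Dg g*XB (cos t) g" using P3_ge[OF assms] by simp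
  then show ?thesis unfolding reBA_div[OF assms] using D NA by (simp add: field_simps)
qed
lemma lam_pi: assumes "g \<ge> 7/5"
  shows "Re (bS g pi / aS g pi) = 15 * (2*g - 1)^4 / (16 * Dg g)"
proof -
  have D: "Dg g > 0" using Dg_pos assms by auto
  have NA: "NA (cos pi) g > 0" using NA_ge[OF assms, of "cos pi"] by simp
  have "15*(2*g-1)^4*NA (cos pi) g = 480*Dg g*XB (cos pi) g" using P3_eq by simp
  then show ?thesis unfolding reBA_div[OF assms] using D NA by (simp add: field_simps)
qed

theorem mainTheorem12:
  fixes \<gamma> :: real
  assumes "\<gamma> \<ge> 7/5"
  shows "sigmaF \<gamma> = 1
    \<and> sigmaE \<gamma> = 15 * (16*\<gamma>^4 + 32*\<gamma>^3 - 24*\<gamma>^2 + 8*\<gamma> - 1)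
                   / (16 * (15*\<gamma>^4 - 15*\<gamma>^2 + 10*\<gamma> - 2))
    \<and> lambdaI \<gamma> = 15 * (2*\<gamma> - 1)^4 / (16 * (15*\<gamma>^4 - 15*\<gamma>^2 + 10*\<gamma> - 2))
    \<and> IIE \<gamma> = (2*\<gamma> - 1)^4 / (16*\<gamma>^4 + 32*\<gamma>^3 - 24*\<gamma>^2 + 8*\<gamma> - 1)"
proof -
  have D: "Dg \<gamma> > 0" and N: "Ng \<gamma> > 0" using Dg_pos Ng_pos assms by auto
  have pi0: "0 \<in> {0..<2*pi}" and pi1: "pi \<in> {0..<2*pi}" using pi_gt_zero by auto
  have F: "sigmaF \<gamma> = 1" unfolding sigmaF_def
  proof (rule cSup_eq_maximum)
    show "1 \<in> (\<lambda>\<theta>. cmod (1 / aS \<gamma> \<theta>)) ` {0..<2 * pi}"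
      using pi0 cmod_a0[of \<gamma>] by (force simp: norm_divide)
    show "x \<le> 1" if "x \<in> (\<lambda>\<theta>. cmod (1 / aS \<gamma> \<theta>)) ` {0..<2 * pi}" for x
      using that cmod_a_ge[OF assms] by (auto simp: norm_divide divide_le_eq)
  qed
  have E: "sigmaE \<gamma> = 15 * Ng \<gamma> / (16 * Dg \<gamma>)" unfolding sigmaE_def
  proof (rule cSup_eq_maximum)
    show "15 * Ng \<gamma> / (16 * Dg \<gamma>) \<in> (\<lambda>\<theta>. cmod (cS \<gamma> \<theta> / aS \<gamma> \<theta>)) ` {0..<2 * pi}"
      using pi1 by (rule rev_image_eqI) (simp add: ratioE_pi[OF assms])
    show "x \<le> 15 * Ng \<gamma> / (16 * Dg \<gamma>)" if "x \<in> (\<lambda>\<theta>. cmod (cS \<gamma> \<theta> / aS \<gamma> \<theta>)) ` {0..<2 * pi}" for x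
      using that ratioE_le[OF assms] by auto
  qed
  have L: "lambdaI \<gamma> = 15 * (2*\<gamma> - 1)^4 / (16 * Dg \<gamma>)" unfolding lambdaI_def
  proof (rule cInf_eq_minimum)
    show "15 * (2*\<gamma> - 1)^4 / (16 * Dg \<gamma>) \<in> (\<lambda>\<theta>. Re (bS \<gamma> \<theta> / aS \<gamma> \<theta>)) ` {0..<2 * pi}"
      using pi1 by (rule rev_image_eqI) (simp add: lam_pi[OF assms])
    show "15 * (2*\<gamma> - 1)^4 / (16 * Dg \<gamma>) \<le> x" if "x \<in> (\<lambda>\<theta>. Re (bS \<gamma> \<theta> / aS \<gamma> \<theta>)) ` {0..<2 * pi}" for x
      using that lam_le[OF assms] by auto
  qed
  have I: "IIE \<gamma> = (2*\<gamma> - 1)^4 / Ng \<gamma>"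
    unfolding IIE_def L E using D N by (simp add: field_simps)
  show ?thesis using F E L I unfolding Ng_def Dg_def by simp
qed

end
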